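(* Let $J\in\mathbb R_{\ge0}^{n\times m}$ (entrywise nonnegative), $h\in\mathbb R^n$, $g\in\mathbb R^m$ be arbitrary otherwise, and let $\rho(a)=\log(e^a+e^{-a})$. Define $f:\{\pm1\}^n\to\mathbb R$ by \[ f(x)=\sum_{j=1}^m\rho\Big(\sum_{i=1}^n x_iJ_{ij}+g_j\Big)+h^Tx, \] and write $f(x)=\sum_{T\subseteq[n]}\hat f_T\prod_{i\in T}x_i$ (its unique multilinear expansion). Then for all distinct $i,j\in[n]$, $\hat f_{\{i,j\}}\ge0$; moreover $\hat f_{\{i,j\}}>0$ whenever there exists $k\in[m]$ with $J_{ik}>0$ and $J_{jk}>0$. *)

theory Defs
  imports Complex_Main
begin

text \<open>The Boolean cube {-1,1}^n, points encoded as functions on indices 0..n-1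
  (index i corresponds to the paper's i+1), extended by 0 outside.\<close>
definition hypercube :: "nat \<Rightarrow> (nat \<Rightarrow> real) set" where
  "hypercube n = {x. (\<forall>i<n. x i = 1 \<or> x i = -1) \<and> (\<forall>i\<ge>n. x i = 0)}"

definition fourier_coeffs :: "nat \<Rightarrow> ((nat \<Rightarrow> real) \<Rightarrow> real) \<Rightarrow> nat set \<Rightarrow> real" where
  "fourier_coeffs n f = (THE c. (\<forall>T. \<not> T \<subseteq> {..<n} \<longrightarrow> c T = 0) \<and>
      (\<forall>x\<in>hypercube n. f x = (\<Sum>T\<in>Pow {..<n}. c T * (\<Prod>i\<in>T. x i))))"

definition rho :: "real \<Rightarrow> real" where
  "rho a = ln (exp a + exp (-a))"

end

theory Submission
  imports Defs
begin


lemma rho_deriv: "(rho has_real_derivative tanh x) (at x)"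
proof -
  have pos: "exp x + exp (-x) > 0" by (simp add: add_pos_pos)
  have "((\<lambda>x. ln (exp x + exp (-x))) has_real_derivative (1/(exp x + exp (-x))) * (exp x - exp (-x))) (at x)"
    by (rule derivative_eq_intros refl | use pos in simp)+
  moreover have "(1/(exp x + exp (-x))) * (exp x - exp (-x)) = tanh x"
    using pos by (simp add: tanh_def sinh_field_def cosh_field_def field_simps)
  ultimately show ?thesis unfolding rho_def[abs_def] by simp
qed

lemma key_strict:
  fixes w u v :: real assumes "u > 0" "v > 0"
  shows "rho (w+2*u+2*v) - rho (w+2*u) - rho (w+2*v) + rho w > 0"
proof -
  define D where "D t = rho (t + 2*v) - rho t" for t
  have "D w < D (w + 2*u)"
  proof (rule DERIV_pos_imp_increasing[of w "w+2*u" D])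
    show "w < w + 2*u" using assms by simp
  next
    fix t
    have h1: "((\<lambda>t. rho (t+2*v)) has_real_derivative tanh (t+2*v)) (at t)"
    proof -
      have "((\<lambda>t. t+2*v) has_real_derivative 1) (at t)"
        by (auto intro!: derivative_eq_intros)
      from DERIV_chain2[OF rho_deriv[of "t+2*v"] this] show ?thesis by simp
    qed
    have "(D has_real_derivative tanh (t + 2*v) - tanh t) (at t)"
      unfolding D_def[abs_def] by (rule DERIV_diff[OF h1 rho_deriv])
    moreover have "tanh (t + 2*v) - tanh t > 0" using assms by simp
    ultimately show "\<exists>y. DERIV D t :> y \<and> y > 0" by blast
  qed
  thus ?thesis unfolding D_def by (simp add: algebra_simps)
qed

lemma key:
  fixes w u v :: real assumes "u \<ge> 0" "v \<ge> 0"
  shows "rho (w+2*u+2*v) - rho (w+2*u) - rho (w+2*v) + rho w \<ge> 0"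
  using key_strict[of u v w] assms by (cases "u = 0 \<or> v = 0") auto



definition flip :: "nat \<Rightarrow> (nat \<Rightarrow> real) \<Rightarrow> nat \<Rightarrow> real" where
  "flip a x = x(a := - x a)"

definition emb :: "nat \<Rightarrow> nat set \<Rightarrow> nat \<Rightarrow> real" where
  "emb n S = (\<lambda>i. if i \<in> S then 1 else if i < n then -1 else 0)"

lemma hypercube_img: "hypercube n = emb n ` Pow {..<n}"
proof
  show "hypercube n \<subseteq> emb n ` Pow {..<n}"
  proof
    fix x assume x: "x \<in> hypercube n"
    have "x = emb n {i. i < n \<and> x i = 1}"
      using x by (auto simp: hypercube_def emb_def fun_eq_iff)
    thus "x \<in> emb n ` Pow {..<n}" by blast
  qed
  show "emb n ` Pow {..<n} \<subseteq> hypercube n"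
    by (auto simp: hypercube_def emb_def split: if_splits)
qed

lemma emb_inj: "inj_on (emb n) (Pow {..<n})"
proof (rule inj_onI)
  fix S T assume S: "S \<in> Pow {..<n}" and T: "T \<in> Pow {..<n}" and e: "emb n S = emb n T"
  show "S = T"
  proof (rule set_eqI)
    fix i
    have "emb n S i = emb n T i" using e by simp
    thus "i \<in> S \<longleftrightarrow> i \<in> T" using S T by (auto simp: emb_def split: if_splits)
  qed
qed

lemma finite_cube: "finite (hypercube n)"
  by (simp add: hypercube_img)

lemma card_cube: "card (hypercube n) = 2 ^ n"
  by (simp add: hypercube_img card_image[OF emb_inj] card_Pow)

lemma cube_sq: "x \<in> hypercube n \<Longrightarrow> i < n \<Longrightarrow> x i * x i = 1"
  by (auto simp: hypercube_def)

lemma flip_in: "a < n \<Longrightarrow> x \<in> hypercube n \<Longrightarrow> flip a x \<in> hypercube n"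
  by (auto simp: hypercube_def flip_def)

lemma flip_flip[simp]: "flip a (flip a x) = x"
  by (auto simp: flip_def)

lemma flip_sum: "a < n \<Longrightarrow> (\<Sum>x\<in>hypercube n. F (flip a x)) = (\<Sum>x\<in>hypercube n. (F x :: real))"
  by (rule sum.reindex_bij_witness[of _ "flip a" "flip a"]) (auto simp: flip_in)

lemma chi_flip: "finite T \<Longrightarrow> (\<Prod>i\<in>T. flip a x i) = (if a \<in> T then - (\<Prod>i\<in>T. x i) else (\<Prod>i\<in>T. x i))"
proof (cases "a \<in> T")
  case True
  assume fin: "finite T"
  have "(\<Prod>i\<in>T. flip a x i) = flip a x a * (\<Prod>i\<in>T-{a}. flip a x i)"
    using fin True by (simp add: prod.remove)
  also have "(\<Prod>i\<in>T-{a}. flip a x i) = (\<Prod>i\<in>T-{a}. x i)"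
    by (rule prod.cong) (auto simp: flip_def)
  also have "flip a x a * (\<Prod>i\<in>T-{a}. x i) = - (x a * (\<Prod>i\<in>T-{a}. x i))"
    by (simp add: flip_def)
  also have "x a * (\<Prod>i\<in>T-{a}. x i) = (\<Prod>i\<in>T. x i)"
    using fin True by (simp add: prod.remove)
  finally show ?thesis using True by simp
next
  case False
  then show ?thesis by (auto simp: flip_def intro!: prod.cong)
qed

lemma chi_sq: "x \<in> hypercube n \<Longrightarrow> T \<subseteq> {..<n} \<Longrightarrow> (\<Prod>i\<in>T. x i) * (\<Prod>i\<in>T. x i) = 1"
proof -
  assume x: "x \<in> hypercube n" and T: "T \<subseteq> {..<n}"
  have "(\<Prod>i\<in>T. x i) * (\<Prod>i\<in>T. x i) = (\<Prod>i\<in>T. x i * x i)"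
    by (simp add: prod.distrib)
  also have "\<dots> = 1" using T cube_sq[OF x] by (intro prod.neutral) auto
  finally show ?thesis .
qed

lemma orth:
  assumes S: "S \<subseteq> {..<n}" and T: "T \<subseteq> {..<n}"
  shows "(\<Sum>x\<in>hypercube n. (\<Prod>i\<in>S. x i) * (\<Prod>i\<in>T. x i)) = (if S = T then 2 ^ n else 0)"
proof (cases "S = T")
  case True
  have "(\<Sum>x\<in>hypercube n. (\<Prod>i\<in>S. x i) * (\<Prod>i\<in>T. x i)) = (\<Sum>x\<in>hypercube n. 1)"
    using True T chi_sq by (intro sum.cong) auto
  thus ?thesis using True card_cube by simp
next
  case False
  then obtain a where a: "(a \<in> S \<and> a \<notin> T) \<or> (a \<notin> S \<and> a \<in> T)" by blast
  have an: "a < n" using a S T by auto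
  have fS: "finite S" and fT: "finite T" using S T finite_subset by auto
  let ?F = "\<lambda>x. (\<Prod>i\<in>S. x i) * (\<Prod>i\<in>T. x i)"
  have "(\<Sum>x\<in>hypercube n. ?F x) = (\<Sum>x\<in>hypercube n. ?F (flip a x))"
    using flip_sum[OF an, of ?F] by simp
  also have "\<dots> = (\<Sum>x\<in>hypercube n. - ?F x)"
    using a by (intro sum.cong) (auto simp: chi_flip[OF fS] chi_flip[OF fT])
  finally have "(\<Sum>x\<in>hypercube n. ?F x) = 0" by (simp add: sum_negf)
  thus ?thesis using False by simp
qed

lemma dual:
  assumes x: "x \<in> hypercube n" and y: "y \<in> hypercube n"
  shows "(\<Sum>T\<in>Pow {..<n}. (\<Prod>i\<in>T. x i) * (\<Prod>i\<in>T. y i)) = (if x = y then 2 ^ n else 0)"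
proof -
  have "(\<Sum>T\<in>Pow {..<n}. (\<Prod>i\<in>T. x i) * (\<Prod>i\<in>T. y i))
      = (\<Sum>T\<in>Pow {..<n}. (\<Prod>i\<in>T. x i * y i) * (\<Prod>i\<in>{..<n}-T. 1))"
    by (simp add: prod.distrib)
  also have "\<dots> = (\<Prod>i\<in>{..<n}. x i * y i + 1)"
    by (rule prod_add[symmetric]) simp
  also have "\<dots> = (if x = y then 2 ^ n else 0)"
  proof (cases "x = y")
    case True
    have "(\<Prod>i\<in>{..<n}. x i * y i + 1) = (\<Prod>i\<in>{..<n}. 2)"
      using True cube_sq[OF x] by (intro prod.cong) auto
    thus ?thesis using True by simp
  next
    case False
    then obtain i where "x i \<noteq> y i" by blast
    have i: "i < n"
    proof (rule ccontr)
      assume "\<not> i < n"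
      thus False using x y \<open>x i \<noteq> y i\<close> unfolding hypercube_def by auto
    qed
    have "x i = 1 \<or> x i = -1" "y i = 1 \<or> y i = -1" using x y i unfolding hypercube_def by auto
    hence i2: "x i * y i + 1 = 0" using \<open>x i \<noteq> y i\<close> by auto
    have "(\<Prod>i\<in>{..<n}. x i * y i + 1) = 0"
      using i i2 by (intro prod_zero) auto
    thus ?thesis using False by simp
  qed
  finally show ?thesis .
qed

lemma fourier_formula:
  "fourier_coeffs n f = (\<lambda>T. if T \<subseteq> {..<n} then (\<Sum>x\<in>hypercube n. f x * (\<Prod>i\<in>T. x i)) / 2 ^ n else 0)"
  (is "_ = ?c")
  unfolding fourier_coeffs_def
proof (rule the_equality)
  show "(\<forall>T. \<not> T \<subseteq> {..<n} \<longrightarrow> ?c T = 0) \<and>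
      (\<forall>x\<in>hypercube n. f x = (\<Sum>T\<in>Pow {..<n}. ?c T * (\<Prod>i\<in>T. x i)))"
  proof (intro conjI allI impI ballI)
    fix T :: "nat set" assume "\<not> T \<subseteq> {..<n}" thus "?c T = 0" by simp
  next
    fix x assume x: "x \<in> hypercube n"
    have "(\<Sum>T\<in>Pow {..<n}. ?c T * (\<Prod>i\<in>T. x i))
        = (\<Sum>T\<in>Pow {..<n}. \<Sum>y\<in>hypercube n. f y / 2 ^ n * ((\<Prod>i\<in>T. x i) * (\<Prod>i\<in>T. y i)))"
      proof (intro sum.cong refl)
        fix T assume "T \<in> Pow {..<n}"
        hence "?c T = (\<Sum>y\<in>hypercube n. f y / 2 ^ n * (\<Prod>i\<in>T. y i))"
          by (simp add: sum_divide_distrib)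
        hence "?c T * (\<Prod>i\<in>T. x i) = (\<Sum>y\<in>hypercube n. f y / 2 ^ n * (\<Prod>i\<in>T. y i)) * (\<Prod>i\<in>T. x i)"
          by simp
        also have "\<dots> = (\<Sum>y\<in>hypercube n. f y / 2 ^ n * ((\<Prod>i\<in>T. x i) * (\<Prod>i\<in>T. y i)))"
          unfolding sum_distrib_right by (intro sum.cong refl) simp
        finally show "?c T * (\<Prod>i\<in>T. x i) = (\<Sum>y\<in>hypercube n. f y / 2 ^ n * ((\<Prod>i\<in>T. x i) * (\<Prod>i\<in>T. y i)))" .
      qed
    also have "\<dots> = (\<Sum>y\<in>hypercube n. f y / 2 ^ n * (\<Sum>T\<in>Pow {..<n}. (\<Prod>i\<in>T. x i) * (\<Prod>i\<in>T. y i)))"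
      by (subst sum.swap) (simp add: sum_distrib_left)
    also have "\<dots> = (\<Sum>y\<in>hypercube n. if y = x then f x else 0)"
      using x by (intro sum.cong refl) (auto simp: dual)
    also have "\<dots> = f x" using x finite_cube by simp
    finally show "f x = (\<Sum>T\<in>Pow {..<n}. ?c T * (\<Prod>i\<in>T. x i))" by simp
  qed
next
  fix c assume c: "(\<forall>T. \<not> T \<subseteq> {..<n} \<longrightarrow> c T = 0) \<and>
      (\<forall>x\<in>hypercube n. f x = (\<Sum>T\<in>Pow {..<n}. c T * (\<Prod>i\<in>T. x i)))"
  show "c = ?c"
  proof
    fix S
    show "c S = ?c S"
    proof (cases "S \<subseteq> {..<n}")
      case False thus ?thesis using c by simp
    next
      case S: True
      have "(\<Sum>x\<in>hypercube n. f x * (\<Prod>i\<in>S. x i))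
          = (\<Sum>x\<in>hypercube n. \<Sum>T\<in>Pow {..<n}. c T * ((\<Prod>i\<in>T. x i) * (\<Prod>i\<in>S. x i)))"
      proof (intro sum.cong refl)
        fix x assume "x \<in> hypercube n"
        hence "f x * (\<Prod>i\<in>S. x i) = (\<Sum>T\<in>Pow {..<n}. c T * (\<Prod>i\<in>T. x i)) * (\<Prod>i\<in>S. x i)" using c by simp
        also have "\<dots> = (\<Sum>T\<in>Pow {..<n}. c T * ((\<Prod>i\<in>T. x i) * (\<Prod>i\<in>S. x i)))"
          unfolding sum_distrib_right by (intro sum.cong refl) simp
        finally show "f x * (\<Prod>i\<in>S. x i) = (\<Sum>T\<in>Pow {..<n}. c T * ((\<Prod>i\<in>T. x i) * (\<Prod>i\<in>S. x i)))" .
      qed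
      also have "\<dots> = (\<Sum>T\<in>Pow {..<n}. c T * (\<Sum>x\<in>hypercube n. (\<Prod>i\<in>T. x i) * (\<Prod>i\<in>S. x i)))"
        by (subst sum.swap) (simp add: sum_distrib_left)
      also have "\<dots> = (\<Sum>T\<in>Pow {..<n}. if T = S then c S * 2 ^ n else 0)"
        using S by (intro sum.cong refl) (auto simp: orth)
      also have "\<dots> = c S * 2 ^ n" using S by simp
      finally show ?thesis using S by simp
    qed
  qed
qed



lemma lin_flip:
  assumes "a < n"
  shows "(\<Sum>b<n. flip a x b * w b) = (\<Sum>b<n. x b * w b) - 2 * x a * w a"
proof -
  have "(\<Sum>b<n. flip a x b * w b) - (\<Sum>b<n. x b * w b) = (\<Sum>b<n. flip a x b * w b - x b * w b)"
    by (simp add: sum_subtractf)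
  also have "\<dots> = (\<Sum>b<n. if b = a then - 2 * x a * w a else 0)"
    by (intro sum.cong refl) (auto simp: flip_def)
  also have "\<dots> = - 2 * x a * w a" using assms by simp
  finally show ?thesis by simp
qed

lemma quad:
  fixes t u v xi xj :: real
  assumes "xi = 1 \<or> xi = -1" "xj = 1 \<or> xj = -1" "u \<ge> 0" "v \<ge> 0"
  shows "xi * xj * (rho t - rho (t - 2*xi*u) - rho (t - 2*xj*v) + rho (t - 2*xj*v - 2*xi*u)) \<ge> 0"
    and "u > 0 \<Longrightarrow> v > 0 \<Longrightarrow> xi * xj * (rho t - rho (t - 2*xi*u) - rho (t - 2*xj*v) + rho (t - 2*xj*v - 2*xi*u)) > 0"
proof -
  have "\<exists>w. xi * xj * (rho t - rho (t - 2*xi*u) - rho (t - 2*xj*v) + rho (t - 2*xj*v - 2*xi*u))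
     = rho (w+2*u+2*v) - rho (w+2*u) - rho (w+2*v) + rho w"
  proof -
    consider "xi = 1" "xj = 1" | "xi = 1" "xj = -1" | "xi = -1" "xj = 1" | "xi = -1" "xj = -1"
      using assms by blast
    thus ?thesis
    proof cases
      case 1 show ?thesis
        by (rule exI[of _ "t-2*u-2*v"]) (simp add: 1 algebra_simps)
    next
      case 2 show ?thesis
        by (rule exI[of _ "t-2*u"]) (simp add: 2 algebra_simps)
    next
      case 3 show ?thesis
        by (rule exI[of _ "t-2*v"]) (simp add: 3 algebra_simps)
    next
      case 4 show ?thesis
        by (rule exI[of _ "t"]) (simp add: 4 algebra_simps)
    qed
  qed
  then obtain w where w: "xi * xj * (rho t - rho (t - 2*xi*u) - rho (t - 2*xj*v) + rho (t - 2*xj*v - 2*xi*u))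
     = rho (w+2*u+2*v) - rho (w+2*u) - rho (w+2*v) + rho w" by blast
  show "xi * xj * (rho t - rho (t - 2*xi*u) - rho (t - 2*xj*v) + rho (t - 2*xj*v - 2*xi*u)) \<ge> 0"
    unfolding w using key assms by blast
  show "u > 0 \<Longrightarrow> v > 0 \<Longrightarrow> xi * xj * (rho t - rho (t - 2*xi*u) - rho (t - 2*xj*v) + rho (t - 2*xj*v - 2*xi*u)) > 0"
    unfolding w using key_strict by blast
qed

theorem lemma5p2:
  fixes n m :: nat and J :: "nat \<Rightarrow> nat \<Rightarrow> real" and h :: "nat \<Rightarrow> real" and g :: "nat \<Rightarrow> real"
    and i j :: nat
  assumes J_nonneg: "\<forall>a<n. \<forall>k<m. J a k \<ge> 0"
    and ij: "i < n" "j < n" "i \<noteq> j"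
  defines "f \<equiv> (\<lambda>x::nat \<Rightarrow> real. (\<Sum>k<m. rho ((\<Sum>a<n. x a * J a k) + g k)) + (\<Sum>a<n. h a * x a))"
  shows "fourier_coeffs n f {i, j} \<ge> 0 \<and>
         ((\<exists>k<m. J i k > 0 \<and> J j k > 0) \<longrightarrow> fourier_coeffs n f {i, j} > 0)"
proof -
  let ?C = "hypercube n"
  define A where "A = (\<Sum>x\<in>?C. f x * (x i * x j))"
  have coef: "fourier_coeffs n f {i, j} = A / 2 ^ n"
    using ij unfolding fourier_formula A_def by simp
  define P where "P k x = x i * x j * (rho ((\<Sum>a<n. x a * J a k) + g k)
      - rho ((\<Sum>a<n. x a * J a k) + g k - 2 * x i * J i k)
      - rho ((\<Sum>a<n. x a * J a k) + g k - 2 * x j * J j k)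
      + rho ((\<Sum>a<n. x a * J a k) + g k - 2 * x j * J j k - 2 * x i * J i k))" for k x
  define D where "D x = f x - f (flip i x) - f (flip j x) + f (flip i (flip j x))" for x
  have fi: "flip i x i = - x i" "flip i x j = x j" "flip j x j = - x j" "flip j x i = x i" for x
    using ij by (auto simp: flip_def)
  have B1: "(\<Sum>x\<in>?C. f (flip i x) * (x i * x j)) = - A"
  proof -
    have "(\<Sum>x\<in>?C. f (flip i (flip i x)) * (flip i x i * flip i x j)) = (\<Sum>x\<in>?C. f (flip i x) * (x i * x j))"
      by (rule flip_sum[OF ij(1), of "\<lambda>y. f (flip i y) * (y i * y j)"])
    thus ?thesis unfolding A_def by (simp add: fi sum_negf)
  qed
  have B2: "(\<Sum>x\<in>?C. f (flip j x) * (x i * x j)) = - A"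
  proof -
    have "(\<Sum>x\<in>?C. f (flip j (flip j x)) * (flip j x i * flip j x j)) = (\<Sum>x\<in>?C. f (flip j x) * (x i * x j))"
      by (rule flip_sum[OF ij(2), of "\<lambda>y. f (flip j y) * (y i * y j)"])
    thus ?thesis unfolding A_def by (simp add: fi sum_negf)
  qed
  have B3: "(\<Sum>x\<in>?C. f (flip i (flip j x)) * (x i * x j)) = A"
  proof -
    have "(\<Sum>x\<in>?C. f (flip i (flip j x)) * (flip j x i * flip j x j)) = (\<Sum>x\<in>?C. f (flip i x) * (x i * x j))"
      by (rule flip_sum[OF ij(2), of "\<lambda>y. f (flip i y) * (y i * y j)"])
    thus ?thesis using B1 by (simp add: fi sum_negf)
  qed
  have sumD: "(\<Sum>x\<in>?C. x i * x j * D x) = 4 * A"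
  proof -
    have "(\<Sum>x\<in>?C. x i * x j * D x) = (\<Sum>x\<in>?C. f x * (x i * x j)) - (\<Sum>x\<in>?C. f (flip i x) * (x i * x j))
        - (\<Sum>x\<in>?C. f (flip j x) * (x i * x j)) + (\<Sum>x\<in>?C. f (flip i (flip j x)) * (x i * x j))"
      unfolding D_def by (simp add: sum.distrib sum_subtractf algebra_simps)
    thus ?thesis using B1 B2 B3 unfolding A_def by simp
  qed
  have Dx: "x i * x j * D x = (\<Sum>k<m. P k x)" if x: "x \<in> ?C" for x
  proof -
    have lin: "(\<Sum>a<n. h a * y a) = (\<Sum>a<n. y a * h a)" for y by (simp add: mult.commute)
    have fx: "f y = (\<Sum>k<m. rho ((\<Sum>a<n. y a * J a k) + g k)) + (\<Sum>a<n. y a * h a)" for y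
      unfolding f_def lin ..
    have "D x = (\<Sum>k<m. rho ((\<Sum>a<n. x a * J a k) + g k)
      - rho ((\<Sum>a<n. x a * J a k) + g k - 2 * x i * J i k)
      - rho ((\<Sum>a<n. x a * J a k) + g k - 2 * x j * J j k)
      + rho ((\<Sum>a<n. x a * J a k) + g k - 2 * x j * J j k - 2 * x i * J i k))"
      unfolding D_def fx lin_flip[OF ij(1)] lin_flip[OF ij(2)] fi
      by (simp add: sum.distrib sum_subtractf algebra_simps)
    thus ?thesis unfolding P_def by (simp add: sum_distrib_left)
  qed
  have Pnn: "P k x \<ge> 0" if "x \<in> ?C" "k < m" for k x
    unfolding P_def using that ij J_nonneg by (intro quad(1)) (auto simp: hypercube_def)
  have Ppos: "P k x > 0" if "x \<in> ?C" "k < m" "J i k > 0" "J j k > 0" for k x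
    unfolding P_def using that ij J_nonneg by (intro quad(2)) (auto simp: hypercube_def)
  have A4: "4 * A = (\<Sum>x\<in>?C. \<Sum>k<m. P k x)"
    using sumD Dx by (metis (no_types, lifting) sum.cong)
  have "A \<ge> 0"
  proof -
    have "(\<Sum>x\<in>?C. \<Sum>k<m. P k x) \<ge> 0" using Pnn by (intro sum_nonneg) auto
    thus ?thesis using A4 by simp
  qed
  moreover have "A > 0" if ex: "\<exists>k<m. J i k > 0 \<and> J j k > 0"
  proof -
    obtain k where k: "k < m" "J i k > 0" "J j k > 0" using ex by blast
    define x0 where "x0 = (\<lambda>a. if a < n then (1::real) else 0)"
    have x0: "x0 \<in> ?C" by (auto simp: hypercube_def x0_def)
    have "(\<Sum>x\<in>?C. \<Sum>k<m. P k x) > 0"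
    proof (rule sum_pos2[OF finite_cube x0])
      show "0 < (\<Sum>k<m. P k x0)" using k x0 Pnn Ppos by (intro sum_pos2[of _ k]) auto
      show "\<And>x. x \<in> ?C \<Longrightarrow> 0 \<le> (\<Sum>k<m. P k x)" using Pnn by (intro sum_nonneg) auto
    qed
    thus ?thesis using A4 by simp
  qed
  ultimately show ?thesis unfolding coef by simp
qed

end
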